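(* Let $h$ be an isometry of the Urysohn metric space $\mathbb U$ and let $\delta>0$. Then for every finite $\mathbf A\subseteq\mathbb U$ there is an isometry $f$ of $\mathbb U$ such that $d(f(a),h(a))\leq\delta$ for all $a\in\mathbf A$, while $d(a,f(b))\geq\delta$ for all $a,b\in\mathbf A$.
   Context: The Urysohn metric space $\mathbb U$ is, up to isometry, the unique complete separable metric space such that every isometric embedding of a finite metric space $\mathbf A$ into $\mathbb U$ extends to any one-point metric extension $\mathbf A\cup\{y\}$ of $\mathbf A$. *)

theory Defs
  imports "HOL-Analysis.Analysis"
begin

definition isometry_of :: "('a::metric_space \<Rightarrow> 'a) \<Rightarrow> bool" where
  "isometry_of f \<longleftrightarrow> bij f \<and> (\<forall>x y. dist (f x) (f y) = dist x y)"

text \<open>Finite metric spaces are represented (up to isometry)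
  by finite sets of natural numbers with a metric.\<close>
definition urysohn_extension_property :: "'a::metric_space itself \<Rightarrow> bool" where
  "urysohn_extension_property TYPE('a) \<longleftrightarrow>
    (\<forall>(S::nat set) (y::nat) (d::nat \<Rightarrow> nat \<Rightarrow> real) (e::nat \<Rightarrow> 'a).
       finite S \<and> y \<notin> S \<and> Metric_space (insert y S) d \<and>
       (\<forall>a\<in>S. \<forall>b\<in>S. dist (e a) (e b) = d a b)
       \<longrightarrow> (\<exists>u::'a. \<forall>a\<in>S. dist u (e a) = d y a))"

definition is_urysohn_space :: "'a::complete_space itself \<Rightarrow> bool" where
  "is_urysohn_space TYPE('a) \<longleftrightarrow>
    (\<exists>D::'a set. countable D \<and> closure D = UNIV) \<and> urysohn_extension_property TYPE('a)"

end

theory Submission imports Defs begin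

lemma EP_set:
  fixes F :: "'a::metric_space set" and r :: "'a \<Rightarrow> real"
  assumes EP: "urysohn_extension_property TYPE('a)"
    and fin: "finite F" and pos: "\<forall>x\<in>F. r x > 0"
    and K: "\<forall>x\<in>F. \<forall>z\<in>F. \<bar>r x - r z\<bar> \<le> dist x z \<and> dist x z \<le> r x + r z"
  shows "\<exists>u. \<forall>x\<in>F. dist u x = r x"
proof -
  obtain g where g: "bij_betw g {0..<card F} F" using ex_bij_betw_nat_finite[OF fin] by blast
  define n where "n = card F"
  define S where "S = {0..<n}"
  define d where "d = (\<lambda>i j. if i = n then (if j = n then 0 else \<bar>r (g j)\<bar>) else if j = n then \<bar>r (g i)\<bar> else dist (g i) (g j))"
  have gS: "\<And>i. i \<in> S \<Longrightarrow> g i \<in> F" using g by (auto simp: S_def n_def bij_betw_def)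
  have ginj: "\<And>i j. i \<in> S \<Longrightarrow> j \<in> S \<Longrightarrow> g i = g j \<Longrightarrow> i = j" using g by (auto simp: S_def n_def bij_betw_def inj_on_def)
  have ms: "Metric_space (insert n S) d"
  proof
    fix x y show "0 \<le> d x y" by (auto simp: d_def)
    show "d x y = d y x" by (auto simp: d_def dist_commute)
  next
    fix x y assume "x \<in> insert n S" "y \<in> insert n S"
    then show "(d x y = 0) = (x = y)"
      using gS pos ginj by (auto simp: d_def S_def) (metis less_irrefl)+
  next
    fix x y z assume xyz: "x \<in> insert n S" "y \<in> insert n S" "z \<in> insert n S"
    show "d x z \<le> d x y + d y z"
    proof -
      have S: "\<And>i. i \<in> insert n S \<Longrightarrow> i \<noteq> n \<Longrightarrow> g i \<in> F \<and> r (g i) > 0" using gS pos by auto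
      show ?thesis using xyz S[of x] S[of y] S[of z]
        K[rule_format, of "g x" "g y"] K[rule_format, of "g y" "g z"] K[rule_format, of "g x" "g z"]
        dist_triangle[of "g x" "g z" "g y"]
        by (cases "x = n"; cases "y = n"; cases "z = n") (auto simp: d_def dist_commute abs_if split: if_splits)
    qed
  qed
  have "n \<notin> S" by (simp add: S_def)
  moreover have "finite S" by (simp add: S_def)
  ultimately obtain u where u: "\<forall>a\<in>S. dist u (g a) = d n a"
    using EP ms unfolding urysohn_extension_property_def
    by (metis (no_types, lifting) d_def \<open>n \<notin> S\<close>)
  show ?thesis
  proof (intro exI ballI)
    fix x assume "x \<in> F"
    then obtain i where "i \<in> S" "g i = x" using g unfolding S_def n_def bij_betw_def by (metis imageE)
    then show "dist u x = r x" using u pos \<open>x \<in> F\<close> \<open>n \<notin> S\<close> by (auto simp: d_def)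
  qed
qed

lemma EP_idx:
  fixes x :: "'i \<Rightarrow> 'a::metric_space" and r :: "'i \<Rightarrow> real"
  assumes EP: "urysohn_extension_property TYPE('a)"
    and fin: "finite I" and pos: "\<forall>i\<in>I. r i > 0"
    and K: "\<forall>i\<in>I. \<forall>j\<in>I. \<bar>r i - r j\<bar> \<le> dist (x i) (x j) \<and> dist (x i) (x j) \<le> r i + r j"
  shows "\<exists>u. \<forall>i\<in>I. dist u (x i) = r i"
proof -
  define r' where "r' w = r (SOME i. i \<in> I \<and> x i = w)" for w
  have r': "r' (x i) = r i" if "i \<in> I" for i
  proof -
    have "(SOME j. j \<in> I \<and> x j = x i) \<in> I \<and> x (SOME j. j \<in> I \<and> x j = x i) = x i"
      by (rule someI[of _ i]) (use that in auto)
    then obtain j where j: "j \<in> I" "x j = x i" "r' (x i) = r j" unfolding r'_def by auto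
    have "\<bar>r i - r j\<bar> \<le> dist (x i) (x j)" using K j(1) that by blast
    then show ?thesis using j by simp
  qed
  have "\<exists>u. \<forall>w\<in>x ` I. dist u w = r' w"
  proof (rule EP_set[OF EP])
    show "finite (x ` I)" using fin by simp
    show "\<forall>w\<in>x ` I. 0 < r' w" using pos r' by simp
    show "\<forall>w\<in>x ` I. \<forall>v\<in>x ` I. \<bar>r' w - r' v\<bar> \<le> dist w v \<and> dist w v \<le> r' w + r' v"
      using K r' by simp
  qed
  then show ?thesis using r' by auto
qed

definition piso :: "'a::metric_space set \<Rightarrow> ('a \<Rightarrow> 'a) \<Rightarrow> bool" where
  "piso F p \<longleftrightarrow> finite F \<and> (\<forall>x\<in>F. \<forall>y\<in>F. dist (p x) (p y) = dist x y)"

lemma forth: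
  fixes F :: "'a::metric_space set"
  assumes EP: "urysohn_extension_property TYPE('a::metric_space)"
    and P: "piso F p"
  shows "\<exists>w. piso (insert z F) (p(z := w)) \<and> (z \<in> F \<longrightarrow> w = p z)"
proof (cases "z \<in> F")
  case True then show ?thesis using P by (intro exI[of _ "p z"]) (simp add: insert_absorb)
next
  case False
  have "\<exists>u. \<forall>i\<in>F. dist u (p i) = dist z i"
  proof (rule EP_idx[OF EP])
    show "finite F" using P by (simp add: piso_def)
    show "\<forall>i\<in>F. 0 < dist z i" using False by auto
    show "\<forall>i\<in>F. \<forall>j\<in>F. \<bar>dist z i - dist z j\<bar> \<le> dist (p i) (p j) \<and> dist (p i) (p j) \<le> dist z i + dist z j"
    proof (intro ballI)
      fix i j assume ij: "i \<in> F" "j \<in> F"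
      then have e: "dist (p i) (p j) = dist i j" using P by (simp add: piso_def)
      show "\<bar>dist z i - dist z j\<bar> \<le> dist (p i) (p j) \<and> dist (p i) (p j) \<le> dist z i + dist z j"
        using abs_dist_diff_le[of i z j] dist_triangle3[of i j z] e by (simp add: dist_commute)
    qed
  qed
  then obtain u where u: "\<forall>i\<in>F. dist u (p i) = dist z i" by blast
  show ?thesis
    using P u False unfolding piso_def by (intro exI[of _ u]) (auto simp: dist_commute)
qed

lemma back_step:
  fixes F :: "'a::metric_space set"
  assumes EP: "urysohn_extension_property TYPE('a::metric_space)"
    and P: "piso F p"
  shows "\<exists>z q. piso (insert z F) q \<and> (\<forall>x\<in>F. q x = p x) \<and> q z = w"
proof (cases "w \<in> p ` F")
  case True then obtain z where "z \<in> F" "p z = w" by blast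
  then show ?thesis using P by (intro exI[of _ z] exI[of _ p]) (simp add: insert_absorb)
next
  case False
  have "\<exists>u. \<forall>i\<in>F. dist u (id i) = dist w (p i)"
  proof (rule EP_idx[OF EP])
    show "finite F" using P by (simp add: piso_def)
    show "\<forall>i\<in>F. 0 < dist w (p i)" using False by auto
    show "\<forall>i\<in>F. \<forall>j\<in>F. \<bar>dist w (p i) - dist w (p j)\<bar> \<le> dist (id i) (id j) \<and> dist (id i) (id j) \<le> dist w (p i) + dist w (p j)"
    proof (intro ballI)
      fix i j assume ij: "i \<in> F" "j \<in> F"
      then have e: "dist (p i) (p j) = dist i j" using P by (simp add: piso_def)
      show "\<bar>dist w (p i) - dist w (p j)\<bar> \<le> dist (id i) (id j) \<and> dist (id i) (id j) \<le> dist w (p i) + dist w (p j)"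
        using abs_dist_diff_le[of "p i" w "p j"] dist_triangle3[of "p i" "p j" w] e by (simp add: dist_commute)
    qed
  qed
  then obtain u where u: "\<forall>i\<in>F. dist u i = dist w (p i)" by auto
  have uF: "u \<notin> F" using u False by force
  show ?thesis
    using P u uF unfolding piso_def by (intro exI[of _ u] exI[of _ "p(u := w)"]) (auto simp: dist_commute)
qed

lemma step:
  fixes F :: "'a::metric_space set"
  assumes EP: "urysohn_extension_property TYPE('a::metric_space)"
    and P: "piso F p"
  shows "\<exists>F' q. piso F' q \<and> F \<subseteq> F' \<and> (\<forall>x\<in>F. q x = p x) \<and> z \<in> F' \<and> z \<in> q ` F'"
proof -
  obtain w where w: "piso (insert z F) (p(z := w))" and wz: "z \<in> F \<longrightarrow> w = p z" using forth[OF EP P] by blast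
  obtain y q where q: "piso (insert y (insert z F)) q" "\<forall>x\<in>insert z F. q x = (p(z := w)) x" "q y = z"
    using back_step[OF EP w] by blast
  show ?thesis
  proof (rule exI[of _ "insert y (insert z F)"], rule exI[of _ q], intro conjI)
    show "\<forall>x\<in>F. q x = p x" using q(2) wz by (metis fun_upd_other fun_upd_same insertCI)
    show "z \<in> q ` insert y (insert z F)" using q(3) by blast
  qed (use q(1) in auto)
qed

lemma ext_iso:
  fixes P :: "'a::complete_space \<Rightarrow> 'a"
  assumes X: "closure X = UNIV" and iso: "\<forall>x\<in>X. \<forall>y\<in>X. dist (P x) (P y) = dist x y"
  shows "\<exists>g. (\<forall>x y. dist (g x) (g y) = dist x y) \<and> (\<forall>x\<in>X. g x = P x)"
proof -
  have "uniformly_continuous_on X P"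
    unfolding uniformly_continuous_on_def using iso by metis
  then obtain g where g: "uniformly_continuous_on (closure X) g" "\<And>x. x \<in> X \<Longrightarrow> P x = g x"
    by (rule uniformly_continuous_on_extension_on_closure) blast
  have gc: "continuous_on UNIV g" using g(1) X uniformly_continuous_imp_continuous by fastforce
  have cl: "closed {x. dist (g x) (g y) = dist x y}" for y
    by (rule closed_Collect_eq) (intro continuous_intros gc; fail)+
  have cl2: "closed {y. dist (g x) (g y) = dist x y}" for x
    by (rule closed_Collect_eq) (intro continuous_intros gc; fail)+
  have 1: "dist (g x) (g y) = dist x y" if "y \<in> X" for x y
  proof -
    have "X \<subseteq> {x. dist (g x) (g y) = dist x y}" using iso g(2) that by auto
    then have "closure X \<subseteq> {x. dist (g x) (g y) = dist x y}" using cl closure_minimal by blast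
    then show ?thesis using X by auto
  qed
  have "dist (g x) (g y) = dist x y" for x y
  proof -
    have "X \<subseteq> {y. dist (g x) (g y) = dist x y}" using 1 by auto
    then have "closure X \<subseteq> {y. dist (g x) (g y) = dist x y}" using cl2 closure_minimal by blast
    then show ?thesis using X by auto
  qed
  then show ?thesis using g(2) by metis
qed

lemma iso_cont: "\<forall>x y. dist (g x) (g y) = dist x y \<Longrightarrow> continuous_on UNIV g"
  by (rule uniformly_continuous_imp_continuous) (auto simp: uniformly_continuous_on_def)

lemma agree_dense:
  fixes f k :: "'a::metric_space \<Rightarrow> 'b::metric_space"
  assumes "continuous_on UNIV f" "continuous_on UNIV k" "closure X = UNIV" "\<forall>x\<in>X. f x = k x"
  shows "f x = k x"
proof -
  have "closed {x. f x = k x}" by (rule closed_Collect_eq) (use assms in auto)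
  moreover have "X \<subseteq> {x. f x = k x}" using assms by auto
  ultimately have "closure X \<subseteq> {x. f x = k x}" using closure_minimal by blast
  then show ?thesis using assms by auto
qed

lemma homog:
  fixes F :: "'a::complete_space set"
  assumes U: "is_urysohn_space TYPE('a)" and P0: "piso F p"
  shows "\<exists>f. isometry_of f \<and> (\<forall>x\<in>F. f x = p x)"
proof -
  obtain D :: "'a set" where D: "countable D" "closure D = UNIV" and EP: "urysohn_extension_property TYPE('a)"
    using U unfolding is_urysohn_space_def by blast
  have "D \<noteq> {}" using D by auto
  define dn where "dn = from_nat_into D"
  have rD: "range dn = D" using D \<open>D \<noteq> {}\<close> by (simp add: dn_def)
  define R where "R = (\<lambda>n (s::'a set \<times> ('a \<Rightarrow> 'a)) (s'::'a set \<times> ('a \<Rightarrow> 'a)).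
     piso (fst s') (snd s') \<and> fst s \<subseteq> fst s' \<and> (\<forall>x\<in>fst s. snd s' x = snd s x) \<and> dn n \<in> fst s' \<and> dn n \<in> snd s' ` fst s')"
  define S where "S = rec_nat (F, p) (\<lambda>n s. SOME s'. R n s s')"
  have S0: "S 0 = (F, p)" by (simp add: S_def)
  have SS: "S (Suc n) = (SOME s'. R n (S n) s')" for n by (simp add: S_def)
  have Rn: "R n (S n) (S (Suc n))" if pi: "piso (fst (S n)) (snd (S n))" for n
  proof -
    obtain F' q where "piso F' q \<and> fst (S n) \<subseteq> F' \<and> (\<forall>x\<in>fst (S n). q x = snd (S n) x) \<and> dn n \<in> F' \<and> dn n \<in> q ` F'"
      using step[OF EP pi, of "dn n"] by blast
    then have "R n (S n) (F', q)" by (simp add: R_def)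
    then show ?thesis unfolding SS by (rule someI)
  qed
  have inv: "piso (fst (S n)) (snd (S n))" for n
  proof (induction n)
    case 0 then show ?case using P0 S0 by simp
  next
    case (Suc n) then show ?case using Rn[OF Suc] by (simp add: R_def)
  qed
  have Rn': "R n (S n) (S (Suc n))" for n using Rn inv by blast
  define Fn where "Fn n = fst (S n)" for n
  define pn where "pn n = snd (S n)" for n
  have mono: "Fn m \<subseteq> Fn n \<and> (\<forall>x\<in>Fn m. pn n x = pn m x)" if "m \<le> n" for m n
    using that
  proof (induction n rule: dec_induct)
    case base then show ?case by simp
  next
    case (step n) then show ?case using Rn'[of n] by (auto simp: R_def Fn_def pn_def)
  qed
  define G where "G = (\<Union>n. Fn n)"
  define P where "P x = pn (SOME n. x \<in> Fn n) x" for x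
  have PG: "P x = pn n x" if "x \<in> Fn n" for x n
  proof -
    define m where "m = (SOME n. x \<in> Fn n)"
    have m: "x \<in> Fn m" unfolding m_def using that by (rule someI)
    have "pn (max m n) x = pn m x" "pn (max m n) x = pn n x" using mono[of m "max m n"] mono[of n "max m n"] m that by auto
    then show ?thesis by (simp add: P_def m_def)
  qed
  have isoG: "\<forall>x\<in>G. \<forall>y\<in>G. dist (P x) (P y) = dist x y"
  proof (intro ballI)
    fix x y assume "x \<in> G" "y \<in> G"
    then obtain m n where mn: "x \<in> Fn m" "y \<in> Fn n" by (auto simp: G_def)
    then have "x \<in> Fn (max m n)" "y \<in> Fn (max m n)" using mono[of m "max m n"] mono[of n "max m n"] by auto
    then show "dist (P x) (P y) = dist x y" using PG inv[of "max m n"] by (simp add: piso_def Fn_def pn_def)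
  qed
  have DG: "D \<subseteq> G" "D \<subseteq> P ` G"
  proof -
    show "D \<subseteq> G" using Rn' rD by (auto simp: G_def Fn_def R_def)
    show "D \<subseteq> P ` G"
    proof
      fix d assume "d \<in> D"
      then obtain n where "d = dn n" using rD by auto
      then obtain x where "x \<in> Fn (Suc n)" "d = pn (Suc n) x" using Rn'[of n] by (auto simp: R_def Fn_def pn_def)
      then have "d = P x" "x \<in> G" using PG by (auto simp: G_def)
      then show "d \<in> P ` G" by blast
    qed
  qed
  have cG: "closure G = UNIV" "closure (P ` G) = UNIV" using DG D closure_mono by blast+
  have injP: "inj_on P G" using isoG unfolding inj_on_def by (metis dist_eq_0_iff)
  define Q where "Q = inv_into G P"
  have QP: "Q (P x) = x" if "x \<in> G" for x using injP that by (simp add: Q_def)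
  have isoQ: "\<forall>x\<in>P ` G. \<forall>y\<in>P ` G. dist (Q x) (Q y) = dist x y" using isoG QP by auto
  obtain g where g: "\<forall>x y. dist (g x) (g y) = dist x y" "\<forall>x\<in>G. g x = P x" using ext_iso[OF cG(1) isoG] by blast
  obtain g' where g': "\<forall>x y. dist (g' x) (g' y) = dist x y" "\<forall>x\<in>P ` G. g' x = Q x" using ext_iso[OF cG(2) isoQ] by blast
  have c: "continuous_on UNIV g" "continuous_on UNIV g'" using iso_cont g(1) g'(1) by blast+
  have "g' (g x) = id x" for x
    by (rule agree_dense[OF _ _ cG(1)]) (use c g g' QP in \<open>auto intro: continuous_on_compose2[of UNIV g'] continuous_intros\<close>)
  moreover have "g (g' x) = id x" for x
    by (rule agree_dense[OF _ _ cG(2)]) (use c g g' QP in \<open>auto intro: continuous_on_compose2[of UNIV g] continuous_intros\<close>)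
  ultimately have "bij g" by (intro o_bij[of g' g]) auto
  moreover have "\<forall>x\<in>F. g x = p x"
  proof
    fix x assume "x \<in> F"
    then have "x \<in> Fn 0" using S0 by (auto simp: Fn_def)
    then have "x \<in> Fn 0" "x \<in> G" by (auto simp: G_def)
    then show "g x = p x" using g(2) PG[of x 0] S0 by (simp add: pn_def)
  qed
  ultimately show ?thesis using g(1) by (auto simp: isometry_of_def)
qed

lemma build_b:
  fixes h :: "'a::metric_space \<Rightarrow> 'a" and C :: "'a set"
  assumes EP: "urysohn_extension_property TYPE('a)"
    and hiso: "\<forall>x y. dist (h x) (h y) = dist x y" and dpos: "\<delta> > 0"
    and finC: "finite C" and finA: "finite A"
  shows "\<exists>b. (\<forall>a\<in>A. \<forall>c\<in>A. dist (b a) (b c) = dist a c) \<and> (\<forall>a\<in>A. \<forall>z\<in>C. dist (b a) z = dist (h a) z + \<delta>)"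
  using finA
proof (induction A rule: finite_induct)
  case empty then show ?case by simp
next
  case (insert a0 A)
  then obtain b where b1: "\<forall>a\<in>A. \<forall>c\<in>A. dist (b a) (b c) = dist a c"
    and b2: "\<forall>a\<in>A. \<forall>z\<in>C. dist (b a) z = dist (h a) z + \<delta>" by blast
  define I where "I = Inl ` C \<union> Inr ` A"
  define x where "x = case_sum id b"
  define r where "r = case_sum (\<lambda>z. dist (h a0) z + \<delta>) (\<lambda>c. dist a0 c)"
  have "\<exists>u. \<forall>i\<in>I. dist u (x i) = r i"
  proof (rule EP_idx[OF EP])
    show "finite I" using finC insert by (simp add: I_def)
    show "\<forall>i\<in>I. 0 < r i" using insert dpos by (auto simp: I_def r_def add_nonneg_pos)
    show "\<forall>i\<in>I. \<forall>j\<in>I. \<bar>r i - r j\<bar> \<le> dist (x i) (x j) \<and> dist (x i) (x j) \<le> r i + r j"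
    proof (intro ballI)
      fix i j assume ij: "i \<in> I" "j \<in> I"
      have LL: "\<bar>r i - r j\<bar> \<le> dist (x i) (x j) \<and> dist (x i) (x j) \<le> r i + r j"
        if "i = Inl z" "j = Inl z'" for z z'
        using that abs_dist_diff_le[of z "h a0" z'] dist_triangle3[of z z' "h a0"] dpos
        by (auto simp: x_def r_def dist_commute)
      have RR: "\<bar>r i - r j\<bar> \<le> dist (x i) (x j) \<and> dist (x i) (x j) \<le> r i + r j"
        if "i = Inr c" "j = Inr c'" "c \<in> A" "c' \<in> A" for c c'
        using that abs_dist_diff_le[of c a0 c'] dist_triangle3[of c c' a0] b1
        by (auto simp: x_def r_def dist_commute)
      have LR: "\<bar>dist (h a0) z + \<delta> - dist a0 c\<bar> \<le> dist z (b c) \<and> dist z (b c) \<le> dist (h a0) z + \<delta> + dist a0 c"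
        if "z \<in> C" "c \<in> A" for z c
      proof -
        have e: "dist z (b c) = dist (h c) z + \<delta>" using b2 that by (simp add: dist_commute)
        have h: "dist a0 c = dist (h a0) (h c)" using hiso by simp
        show ?thesis unfolding e h
          using dist_triangle[of "h a0" z "h c"] dist_triangle[of "h c" z "h a0"] dist_triangle[of "h a0" "h c" z]
            dpos by (simp add: dist_commute abs_le_iff)
      qed
      show "\<bar>r i - r j\<bar> \<le> dist (x i) (x j) \<and> dist (x i) (x j) \<le> r i + r j"
      proof (cases i)
        case (Inl z) note i = this
        show ?thesis
        proof (cases j)
          case (Inl z') then show ?thesis using LL i by blast
        next
          case (Inr c') then show ?thesis using LR[of z c'] i ij by (auto simp: I_def x_def r_def)
        qed
      next
        case (Inr c) note i = this
        show ?thesis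
        proof (cases j)
          case (Inl z') then show ?thesis using LR[of z' c] i ij
            by (auto simp: I_def x_def r_def dist_commute abs_minus_commute)
        next
          case (Inr c') then show ?thesis using RR i ij by (auto simp: I_def)
        qed
      qed
    qed
  qed
  then obtain u where u: "\<forall>i\<in>I. dist u (x i) = r i" by blast
  have u1: "dist u z = dist (h a0) z + \<delta>" if "z \<in> C" for z
    using u that by (force simp: I_def x_def r_def)
  have u2: "dist u (b c) = dist a0 c" if "c \<in> A" for c
    using u that by (force simp: I_def x_def r_def)
  have ne: "c \<noteq> a0" if "c \<in> A" for c using that insert by auto
  show ?case
  proof (intro exI[of _ "b(a0 := u)"] conjI ballI)
    fix a c assume "a \<in> insert a0 A" "c \<in> insert a0 A"
    then show "dist ((b(a0 := u)) a) ((b(a0 := u)) c) = dist a c"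
      using b1 u2 ne by (auto simp: dist_commute)
  next
    fix a z assume "a \<in> insert a0 A" "z \<in> C"
    then show "dist ((b(a0 := u)) a) z = dist (h a) z + \<delta>"
      using b2 u1 ne by auto
  qed
qed

theorem mainTheorem15:
  fixes h :: "'a::complete_space \<Rightarrow> 'a" and \<delta> :: real and A :: "'a set"
  assumes "is_urysohn_space TYPE('a)"
    and "isometry_of h"
    and "\<delta> > 0"
    and "finite A"
  shows "\<exists>f. isometry_of f \<and> (\<forall>a\<in>A. dist (f a) (h a) \<le> \<delta>) \<and>
             (\<forall>a\<in>A. \<forall>b\<in>A. dist a (f b) \<ge> \<delta>)"
proof -
  have EP: "urysohn_extension_property TYPE('a)" using assms(1) by (simp add: is_urysohn_space_def)
  have hiso: "\<forall>x y. dist (h x) (h y) = dist x y" using assms(2) by (simp add: isometry_of_def)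
  obtain b where b1: "\<forall>a\<in>A. \<forall>c\<in>A. dist (b a) (b c) = dist a c"
    and b2: "\<forall>a\<in>A. \<forall>z\<in>A \<union> h ` A. dist (b a) z = dist (h a) z + \<delta>"
    using build_b[OF EP hiso assms(3), of "A \<union> h ` A" A] assms(4) by blast
  have "piso A b" using b1 assms(4) by (simp add: piso_def)
  then obtain f where f: "isometry_of f" "\<forall>x\<in>A. f x = b x" using homog[OF assms(1)] by blast
  show ?thesis
  proof (intro exI[of _ f] conjI ballI f(1))
    fix a assume "a \<in> A"
    then show "dist (f a) (h a) \<le> \<delta>" using f(2) b2 by simp
  next
    fix a c assume "a \<in> A" "c \<in> A"
    then have "dist (f c) a = dist (h c) a + \<delta>" using f(2) b2 by simp
    then show "\<delta> \<le> dist a (f c)" by (simp add: dist_commute)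
  qed
qed

end
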